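(* Let $G$ be a group and $P$ a subgroup of $\operatorname{Aut}(G)$. Then the partition hypergroup $\{G\}_P$ is realizable; more precisely, it is isomorphic to $\mathbf{H}(S)$ where $S=\{C_{[a]}:[a]\in\{G\}_P\}$, $C_{[a]}=\{(x,y)\in G\times G:xy^{-1}\in[a]\}$, is the partition association scheme on $G$.
   Context: For $a\in G$, $[a]=\{g(a):g\in P\}$ and $\{G\}_P$ is the set of these orbits. The partition hypergroup $\{G\}_P$ has hyperoperation $[x]*[y]=\{[z]: z=x'y' \text{ for some } x',y'\in G \text{ with } [x']=[x],[y']=[y]\}$. For a nonempty set $X$: $1_X$ is the diagonal, $p^*=\{(a,b):(b,a)\in p\}$, $xp=\{y:(x,y)\in p\}$. An association scheme on $X$ is a partition $S$ of $X\times X$ with $1_X\in S$, closed under $p\mapsto p^*$, such that for all $p,q,r\in S$ there is a cardinal $a_{pq}^r$ with $|yp\cap zq^*|=a_{pq}^r$ for all $y\in X$, $z\in yr$. $\mathbf{H}(S)$ is the hypergroup on $S$ with $p*q=\{r: a_{pq}^r\ge1\}$ (complex multiplication), identity $1_X$, inverse $p^*$. A hypergroup is realizable if it is isomorphic to $\mathbf{H}(S)$ for some association scheme $S$. (A hypergroup is a nonempty set with a hyperoperation into nonempty subsets that is associative, has a unique identity, unique inverses $h^{-1}$ with $e\in(h^{-1}*h)\cap(h*h^{-1})$, and is reversible.) *)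

theory Defs
  imports "HOL-Algebra.Bij" "HOL-Library.Equipollence"
begin

definition is_hg_identity :: "'h set \<Rightarrow> ('h \<Rightarrow> 'h \<Rightarrow> 'h set) \<Rightarrow> 'h \<Rightarrow> bool" where
  "is_hg_identity H hop e \<longleftrightarrow> e \<in> H \<and> (\<forall>h\<in>H. hop e h = {h} \<and> hop h e = {h})"

definition hg_id :: "'h set \<Rightarrow> ('h \<Rightarrow> 'h \<Rightarrow> 'h set) \<Rightarrow> 'h" where
  "hg_id H hop = (THE e. is_hg_identity H hop e)"

definition is_hg_inverse :: "'h set \<Rightarrow> ('h \<Rightarrow> 'h \<Rightarrow> 'h set) \<Rightarrow> 'h \<Rightarrow> 'h \<Rightarrow> bool" where
  "is_hg_inverse H hop h h' \<longleftrightarrow> h' \<in> H \<and> hg_id H hop \<in> hop h' h \<inter> hop h h'"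

definition hg_inv :: "'h set \<Rightarrow> ('h \<Rightarrow> 'h \<Rightarrow> 'h set) \<Rightarrow> 'h \<Rightarrow> 'h" where
  "hg_inv H hop h = (THE h'. is_hg_inverse H hop h h')"

definition hypergroup :: "'h set \<Rightarrow> ('h \<Rightarrow> 'h \<Rightarrow> 'h set) \<Rightarrow> bool" where
  "hypergroup H hop \<longleftrightarrow>
     H \<noteq> {} \<and>
     (\<forall>x\<in>H. \<forall>y\<in>H. hop x y \<noteq> {} \<and> hop x y \<subseteq> H) \<and>
     (\<forall>x\<in>H. \<forall>y\<in>H. \<forall>z\<in>H. (\<Union>w\<in>hop x y. hop w z) = (\<Union>w\<in>hop y z. hop x w)) \<and>
     (\<exists>!e. is_hg_identity H hop e) \<and>
     (\<forall>h\<in>H. \<exists>!h'. is_hg_inverse H hop h h') \<and>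
     (\<forall>x\<in>H. \<forall>y\<in>H. \<forall>z\<in>H. z \<in> hop x y \<longrightarrow>
         y \<in> hop (hg_inv H hop x) z \<and> x \<in> hop z (hg_inv H hop y))"

definition hg_iso ::
  "'h set \<Rightarrow> ('h \<Rightarrow> 'h \<Rightarrow> 'h set) \<Rightarrow> 'k set \<Rightarrow> ('k \<Rightarrow> 'k \<Rightarrow> 'k set) \<Rightarrow> ('h \<Rightarrow> 'k) \<Rightarrow> bool" where
  "hg_iso H1 hop1 H2 hop2 f \<longleftrightarrow>
     bij_betw f H1 H2 \<and> (\<forall>x\<in>H1. \<forall>y\<in>H1. f ` hop1 x y = hop2 (f x) (f y))"

definition hg_isomorphic ::
  "'h set \<Rightarrow> ('h \<Rightarrow> 'h \<Rightarrow> 'h set) \<Rightarrow> 'k set \<Rightarrow> ('k \<Rightarrow> 'k \<Rightarrow> 'k set) \<Rightarrow> bool" where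
  "hg_isomorphic H1 hop1 H2 hop2 \<longleftrightarrow> (\<exists>f. hg_iso H1 hop1 H2 hop2 f)"

text \<open>xp = {y. (x,y) \<in> p}; the set  yp \<inter> zq* is {w. (y,w)\<in>p \<and> (w,z)\<in>q}.\<close>

definition row :: "'a \<Rightarrow> ('a \<times> 'a) set \<Rightarrow> 'a set" where
  "row x p = {y. (x, y) \<in> p}"

definition partition_of :: "'b set \<Rightarrow> 'b set set \<Rightarrow> bool" where
  "partition_of A S \<longleftrightarrow> (\<forall>s\<in>S. s \<noteq> {}) \<and> (\<forall>s\<in>S. \<forall>t\<in>S. s \<noteq> t \<longrightarrow> s \<inter> t = {}) \<and> \<Union>S = A"

text \<open>Cardinals are compared via equipollence, so that infinite schemes are allowed.\<close>

definition association_scheme :: "'a set \<Rightarrow> ('a \<times> 'a) set set \<Rightarrow> bool" where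
  "association_scheme X S \<longleftrightarrow>
     X \<noteq> {} \<and>
     partition_of (X \<times> X) S \<and>
     Id_on X \<in> S \<and>
     (\<forall>p\<in>S. converse p \<in> S) \<and>
     (\<forall>p\<in>S. \<forall>q\<in>S. \<forall>r\<in>S. \<exists>c::'a set. \<forall>y\<in>X. \<forall>z\<in>row y r.
         row y p \<inter> row z (converse q) \<approx> c)"

text \<open>Complex multiplication: r \<in> p*q iff a_pq^r \<ge> 1 (i.e. the common set is nonempty).\<close>

definition scheme_hop :: "'a set \<Rightarrow> ('a \<times> 'a) set set \<Rightarrow>
     ('a \<times> 'a) set \<Rightarrow> ('a \<times> 'a) set \<Rightarrow> ('a \<times> 'a) set set" where
  "scheme_hop X S p q = {r\<in>S. \<forall>y\<in>X. \<forall>z\<in>row y r. row y p \<inter> row z (converse q) \<noteq> {}}"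

definition aut_orbit :: "('a, 'c) monoid_scheme \<Rightarrow> ('a \<Rightarrow> 'a) set \<Rightarrow> 'a \<Rightarrow> 'a set" where
  "aut_orbit G P a = {g a | g. g \<in> P}"

definition orbits :: "('a, 'c) monoid_scheme \<Rightarrow> ('a \<Rightarrow> 'a) set \<Rightarrow> 'a set set" where
  "orbits G P = aut_orbit G P ` carrier G"

definition orbit_hop :: "('a, 'c) monoid_scheme \<Rightarrow> ('a \<Rightarrow> 'a) set \<Rightarrow> 'a set \<Rightarrow> 'a set \<Rightarrow> 'a set set" where
  "orbit_hop G P X Y = {aut_orbit G P (x' \<otimes>\<^bsub>G\<^esub> y') | x' y'.
      x' \<in> carrier G \<and> y' \<in> carrier G \<and> aut_orbit G P x' = X \<and> aut_orbit G P y' = Y}"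

definition orbit_rel :: "('a, 'c) monoid_scheme \<Rightarrow> ('a \<Rightarrow> 'a) set \<Rightarrow> 'a set \<Rightarrow> ('a \<times> 'a) set" where
  "orbit_rel G P A = {(x, y). x \<in> carrier G \<and> y \<in> carrier G \<and> x \<otimes>\<^bsub>G\<^esub> inv\<^bsub>G\<^esub> y \<in> A}"

definition partition_scheme :: "('a, 'c) monoid_scheme \<Rightarrow> ('a \<Rightarrow> 'a) set \<Rightarrow> ('a \<times> 'a) set set" where
  "partition_scheme G P = orbit_rel G P ` orbits G P"

end

theory Submission
  imports Defs
begin


lemma hg_id_unique: "is_hg_identity H hop e \<Longrightarrow> is_hg_identity H hop e' \<Longrightarrow> e = e'"
  unfolding is_hg_identity_def by (metis singleton_inject)

lemma hg_id_eq: "is_hg_identity H hop e \<Longrightarrow> hg_id H hop = e"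
  unfolding hg_id_def using hg_id_unique by (metis the_equality)

lemma hg_inv_eq: "is_hg_inverse H hop h h' \<Longrightarrow> (\<And>k. is_hg_inverse H hop h k \<Longrightarrow> k = h')
   \<Longrightarrow> hg_inv H hop h = h'"
  unfolding hg_inv_def by (rule the_equality)


lemma hg_transfer:
  assumes hg: "hypergroup H1 hop1" and iso: "hg_iso H1 hop1 H2 hop2 f"
  shows "hypergroup H2 hop2"
proof -
  have bij: "bij_betw f H1 H2" and hom: "\<And>x y. x \<in> H1 \<Longrightarrow> y \<in> H1 \<Longrightarrow> hop2 (f x) (f y) = f ` hop1 x y"
    using iso unfolding hg_iso_def by auto
  have inj: "inj_on f H1" and img: "f ` H1 = H2" using bij by (auto simp: bij_betw_def)
  have ne: "H1 \<noteq> {}" and cl: "\<And>x y. x \<in> H1 \<Longrightarrow> y \<in> H1 \<Longrightarrow> hop1 x y \<noteq> {} \<and> hop1 x y \<subseteq> H1"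
    and as: "\<And>x y z. x \<in> H1 \<Longrightarrow> y \<in> H1 \<Longrightarrow> z \<in> H1 \<Longrightarrow>
       (\<Union>w\<in>hop1 x y. hop1 w z) = (\<Union>w\<in>hop1 y z. hop1 x w)"
    and idu: "\<exists>!e. is_hg_identity H1 hop1 e"
    and invu: "\<And>h. h \<in> H1 \<Longrightarrow> \<exists>!h'. is_hg_inverse H1 hop1 h h'"
    and rv: "\<And>x y z. x \<in> H1 \<Longrightarrow> y \<in> H1 \<Longrightarrow> z \<in> H1 \<Longrightarrow> z \<in> hop1 x y \<Longrightarrow>
         y \<in> hop1 (hg_inv H1 hop1 x) z \<and> x \<in> hop1 z (hg_inv H1 hop1 y)"
  proof -
    note h = hg[unfolded hypergroup_def]
    show "H1 \<noteq> {}" using h by (rule conjunct1)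
    show "\<And>x y. x \<in> H1 \<Longrightarrow> y \<in> H1 \<Longrightarrow> hop1 x y \<noteq> {} \<and> hop1 x y \<subseteq> H1"
      by (rule h[THEN conjunct2, THEN conjunct1, rule_format])
    show "\<And>x y z. x \<in> H1 \<Longrightarrow> y \<in> H1 \<Longrightarrow> z \<in> H1 \<Longrightarrow>
       (\<Union>w\<in>hop1 x y. hop1 w z) = (\<Union>w\<in>hop1 y z. hop1 x w)"
      by (rule h[THEN conjunct2, THEN conjunct2, THEN conjunct1, rule_format])
    show "\<exists>!e. is_hg_identity H1 hop1 e"
      using h[THEN conjunct2, THEN conjunct2, THEN conjunct2, THEN conjunct1] .
    show "\<And>h. h \<in> H1 \<Longrightarrow> \<exists>!h'. is_hg_inverse H1 hop1 h h'"
      by (rule h[THEN conjunct2, THEN conjunct2, THEN conjunct2, THEN conjunct2, THEN conjunct1, rule_format])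
    show "\<And>x y z. x \<in> H1 \<Longrightarrow> y \<in> H1 \<Longrightarrow> z \<in> H1 \<Longrightarrow> z \<in> hop1 x y \<Longrightarrow>
         y \<in> hop1 (hg_inv H1 hop1 x) z \<and> x \<in> hop1 z (hg_inv H1 hop1 y)"
      by (rule h[THEN conjunct2, THEN conjunct2, THEN conjunct2, THEN conjunct2, THEN conjunct2, rule_format])
  qed
  have H2E: "\<exists>a\<in>H1. x = f a" if "x \<in> H2" for x using that unfolding img[symmetric] by (rule imageE) blast
  have fH: "f a \<in> H2" if "a \<in> H1" for a unfolding img[symmetric] using that by (rule imageI)
  have imeq: "f ` A = f ` B \<longleftrightarrow> A = B" if "A \<subseteq> H1" "B \<subseteq> H1" for A B
    by (rule inj_on_image_eq_iff[OF inj that])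
  have immem: "f a \<in> f ` A \<longleftrightarrow> a \<in> A" if "A \<subseteq> H1" "a \<in> H1" for A a
    by (rule inj_on_image_mem_iff[OF inj that(2,1)])
  have K1: "is_hg_identity H2 hop2 (f e) \<longleftrightarrow> is_hg_identity H1 hop1 e" if e: "e \<in> H1" for e
  proof -
    have "(\<forall>h\<in>H2. hop2 (f e) h = {h} \<and> hop2 h (f e) = {h}) \<longleftrightarrow>
          (\<forall>h\<in>H1. hop2 (f e) (f h) = {f h} \<and> hop2 (f h) (f e) = {f h})"
      unfolding img[symmetric] by simp
    also have "\<dots> \<longleftrightarrow> (\<forall>h\<in>H1. hop1 e h = {h} \<and> hop1 h e = {h})"
    proof (intro ball_cong refl)
      fix h assume h: "h \<in> H1"
      have "hop2 (f e) (f h) = {f h} \<longleftrightarrow> hop1 e h = {h}"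
        using hom[OF e h] imeq[of "hop1 e h" "{h}"] cl[OF e h] h by simp
      moreover have "hop2 (f h) (f e) = {f h} \<longleftrightarrow> hop1 h e = {h}"
        using hom[OF h e] imeq[of "hop1 h e" "{h}"] cl[OF h e] h by simp
      ultimately show "(hop2 (f e) (f h) = {f h} \<and> hop2 (f h) (f e) = {f h}) \<longleftrightarrow> (hop1 e h = {h} \<and> hop1 h e = {h})"
        by (simp only:)
    qed
    finally have A: "(\<forall>h\<in>H2. hop2 (f e) h = {h} \<and> hop2 h (f e) = {h}) \<longleftrightarrow>
       (\<forall>h\<in>H1. hop1 e h = {h} \<and> hop1 h e = {h})" .
    show ?thesis unfolding is_hg_identity_def using A e fH[OF e] by (simp only: simp_thms)
  qed
  obtain e1 where e1: "is_hg_identity H1 hop1 e1" using idu by blast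
  have e1H: "e1 \<in> H1" using e1 by (simp add: is_hg_identity_def)
  have id1: "hg_id H1 hop1 = e1" using hg_id_eq[OF e1] .
  have e2: "is_hg_identity H2 hop2 (f e1)" using K1[OF e1H] e1 by simp
  have id2: "hg_id H2 hop2 = f e1" using hg_id_eq[OF e2] .
  have K3: "is_hg_inverse H2 hop2 (f h) (f h') \<longleftrightarrow> is_hg_inverse H1 hop1 h h'" if h: "h \<in> H1" "h' \<in> H1" for h h'
  proof -
    have 1: "f e1 \<in> hop2 (f h') (f h) \<longleftrightarrow> e1 \<in> hop1 h' h"
      unfolding hom[OF h(2) h(1)] using immem[OF _ e1H] cl[OF h(2) h(1)] by simp
    have 2: "f e1 \<in> hop2 (f h) (f h') \<longleftrightarrow> e1 \<in> hop1 h h'"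
      unfolding hom[OF h(1) h(2)] using immem[OF _ e1H] cl[OF h(1) h(2)] by simp
    show ?thesis unfolding is_hg_inverse_def id1 id2 using 1 2 fH[OF h(2)] h(2) by blast
  qed
  have K4: "hg_inv H2 hop2 (f h) = f (hg_inv H1 hop1 h)" if h: "h \<in> H1" for h
  proof -
    obtain h' where h': "is_hg_inverse H1 hop1 h h'" using invu[OF h] by blast
    have h'H: "h' \<in> H1" using h' by (simp add: is_hg_inverse_def)
    have i1: "hg_inv H1 hop1 h = h'" using hg_inv_eq[OF h'] invu[OF h] h' by blast
    have "hg_inv H2 hop2 (f h) = f h'"
    proof (rule hg_inv_eq)
      show "is_hg_inverse H2 hop2 (f h) (f h')" using K3[OF h h'H] h' by simp
      fix k assume k: "is_hg_inverse H2 hop2 (f h) k"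
      then have "k \<in> H2" by (simp add: is_hg_inverse_def)
      then obtain k' where k': "k' \<in> H1" "k = f k'" using H2E by blast
      then have "is_hg_inverse H1 hop1 h k'" using K3[OF h k'(1)] k by simp
      then show "k = f h'" using invu[OF h] h' k' by blast
    qed
    then show ?thesis using i1 by simp
  qed
  have invH1: "hg_inv H1 hop1 h \<in> H1" if h: "h \<in> H1" for h
  proof -
    obtain h' where h': "is_hg_inverse H1 hop1 h h'" using invu[OF h] by blast
    have "hg_inv H1 hop1 h = h'" using hg_inv_eq[OF h'] invu[OF h] h' by blast
    then show ?thesis using h' by (simp add: is_hg_inverse_def)
  qed
  show ?thesis
    unfolding hypergroup_def
  proof (intro conjI ballI impI)
    show "H2 \<noteq> {}" using ne img by blast
  next
    fix x y assume "x \<in> H2" "y \<in> H2"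
    then obtain a b where ab: "a \<in> H1" "b \<in> H1" "x = f a" "y = f b" using H2E by metis
    show "hop2 x y \<noteq> {}" using ab hom cl by simp
    show "hop2 x y \<subseteq> H2"
    proof -
      have "hop2 x y = f ` hop1 a b" using ab hom by simp
      also have "\<dots> \<subseteq> f ` H1" using cl[OF ab(1,2)] by (intro image_mono) simp
      finally show ?thesis using img by simp
    qed
  next
    fix x y z assume "x \<in> H2" "y \<in> H2" "z \<in> H2"
    then obtain a b c where abc: "a \<in> H1" "b \<in> H1" "c \<in> H1" "x = f a" "y = f b" "z = f c" using H2E by metis
    have "(\<Union>w\<in>hop2 x y. hop2 w z) = (\<Union>w\<in>hop1 a b. hop2 (f w) (f c))" using abc hom by simp
    also have "\<dots> = (\<Union>w\<in>hop1 a b. f ` hop1 w c)"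
    proof (rule SUP_cong[OF refl])
      fix w assume "w \<in> hop1 a b"
      then have "w \<in> H1" using cl[OF abc(1,2)] by blast
      then show "hop2 (f w) (f c) = f ` hop1 w c" using hom abc by simp
    qed
    also have "\<dots> = f ` (\<Union>w\<in>hop1 a b. hop1 w c)" by (simp add: image_UN)
    also have "\<dots> = f ` (\<Union>w\<in>hop1 b c. hop1 a w)" using as abc by simp
    also have "\<dots> = (\<Union>w\<in>hop1 b c. f ` hop1 a w)" by (simp add: image_UN)
    also have "\<dots> = (\<Union>w\<in>hop1 b c. hop2 (f a) (f w))"
    proof (rule SUP_cong[OF refl])
      fix w assume "w \<in> hop1 b c"
      then have "w \<in> H1" using cl[OF abc(2,3)] by blast
      then show "f ` hop1 a w = hop2 (f a) (f w)" using hom abc by simp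
    qed
    also have "\<dots> = (\<Union>w\<in>hop2 y z. hop2 x w)" using abc hom by simp
    finally show "(\<Union>w\<in>hop2 x y. hop2 w z) = (\<Union>w\<in>hop2 y z. hop2 x w)" .
  next
    show "\<exists>!e. is_hg_identity H2 hop2 e" using e2 hg_id_unique by metis
  next
    fix x assume "x \<in> H2"
    then obtain a where a: "a \<in> H1" "x = f a" using H2E by metis
    obtain a' where a': "is_hg_inverse H1 hop1 a a'" using invu[OF a(1)] by blast
    have a'H: "a' \<in> H1" using a' by (simp add: is_hg_inverse_def)
    show "\<exists>!h'. is_hg_inverse H2 hop2 x h'"
    proof
      show "is_hg_inverse H2 hop2 x (f a')" using K3[OF a(1) a'H] a' a by simp
      fix k assume k: "is_hg_inverse H2 hop2 x k"
      then have "k \<in> H2" by (simp add: is_hg_inverse_def)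
      then obtain k' where k': "k' \<in> H1" "k = f k'" using H2E by blast
      then have "is_hg_inverse H1 hop1 a k'" using K3[OF a(1) k'(1)] k a by simp
      then show "k = f a'" using invu[OF a(1)] a' k' by blast
    qed
  next
    fix x y z assume "x \<in> H2" "y \<in> H2" "z \<in> H2" and zin: "z \<in> hop2 x y"
    then obtain a b c where abc: "a \<in> H1" "b \<in> H1" "c \<in> H1" "x = f a" "y = f b" "z = f c" using H2E by metis
    have "c \<in> hop1 a b" using zin abc hom immem cl by simp
    then have r: "b \<in> hop1 (hg_inv H1 hop1 a) c" "a \<in> hop1 c (hg_inv H1 hop1 b)" using rv abc by blast+
    show "y \<in> hop2 (hg_inv H2 hop2 x) z" using r(1) abc K4 hom invH1 by simp
    show "x \<in> hop2 z (hg_inv H2 hop2 y)" using r(2) abc K4 hom invH1 by simp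
  qed
qed

locale autP = group G for G (structure) +
  fixes P :: "('a \<Rightarrow> 'a) set"
  assumes subP: "subgroup P (AutoGroup G)"
begin

abbreviation orb where "orb a \<equiv> aut_orbit G P a"

lemma P_auto: assumes "g \<in> P" shows "g \<in> hom G G" "bij_betw g (carrier G) (carrier G)"
  "g \<in> extensional (carrier G)"
proof -
  have "g \<in> auto G" using subgroup.subset[OF subP] assms by (auto simp: AutoGroup_def)
  then show "g \<in> hom G G" "bij_betw g (carrier G) (carrier G)" "g \<in> extensional (carrier G)"
    by (auto simp: auto_def Bij_def)
qed

lemma P_closed: "g \<in> P \<Longrightarrow> x \<in> carrier G \<Longrightarrow> g x \<in> carrier G"
  using P_auto(1) by (auto simp: hom_def)

lemma P_mult: "g \<in> P \<Longrightarrow> x \<in> carrier G \<Longrightarrow> y \<in> carrier G \<Longrightarrow> g (x \<otimes> y) = g x \<otimes> g y"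
  using P_auto(1) by (auto simp: hom_def)

lemma P_gh: "g \<in> P \<Longrightarrow> group_hom G G g"
  using P_auto(1) group_axioms by (simp add: group_hom_def group_hom_axioms_def)

lemma P_one: "g \<in> P \<Longrightarrow> g \<one> = \<one>"
  using group_hom.hom_one[OF P_gh] by simp

lemma P_inv: "g \<in> P \<Longrightarrow> x \<in> carrier G \<Longrightarrow> g (inv x) = inv (g x)"
  using group_hom.hom_inv[OF P_gh] by simp

lemma P_inj: "g \<in> P \<Longrightarrow> x \<in> carrier G \<Longrightarrow> y \<in> carrier G \<Longrightarrow> g x = g y \<Longrightarrow> x = y"
  using P_auto(2) by (auto simp: bij_betw_def inj_on_def)

lemma P_id: "\<exists>k\<in>P. \<forall>x\<in>carrier G. k x = x"
proof -
  have "\<one>\<^bsub>AutoGroup G\<^esub> \<in> P" using subgroup.one_closed[OF subP] .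
  moreover have "\<one>\<^bsub>AutoGroup G\<^esub> = (\<lambda>x\<in>carrier G. x)" by (simp add: AutoGroup_def BijGroup_def)
  ultimately have "(\<lambda>x\<in>carrier G. x) \<in> P" by simp
  then show ?thesis by (intro bexI[where x="\<lambda>x\<in>carrier G. x"]) auto
qed

lemma P_comp: assumes "g \<in> P" "h \<in> P" shows "\<exists>k\<in>P. \<forall>x\<in>carrier G. k x = g (h x)"
proof -
  have "g \<otimes>\<^bsub>AutoGroup G\<^esub> h \<in> P" using subgroup.m_closed[OF subP] assms .
  moreover have "g \<in> Bij (carrier G)" "h \<in> Bij (carrier G)" using P_auto assms by (auto simp: Bij_def)
  ultimately have "compose (carrier G) g h \<in> P" by (simp add: AutoGroup_def BijGroup_def)
  then show ?thesis by (intro bexI[where x="compose (carrier G) g h"]) (auto simp: compose_def)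
qed

lemma P_invf: assumes "g \<in> P" shows "\<exists>h\<in>P. \<forall>x\<in>carrier G. h (g x) = x \<and> g (h x) = x"
proof -
  define h where "h = inv\<^bsub>AutoGroup G\<^esub> g"
  have hP: "h \<in> P" unfolding h_def using subgroup.m_inv_closed[OF subP] assms .
  have gA: "g \<in> carrier (AutoGroup G)" using subgroup.subset[OF subP] assms by blast
  have "h \<otimes>\<^bsub>AutoGroup G\<^esub> g = \<one>\<^bsub>AutoGroup G\<^esub>" unfolding h_def
    using group.l_inv[OF AutoGroup gA] .
  moreover have "h \<in> Bij (carrier G)" "g \<in> Bij (carrier G)" using P_auto hP assms by (auto simp: Bij_def)
  ultimately have "compose (carrier G) h g = (\<lambda>x\<in>carrier G. x)"
    by (simp add: AutoGroup_def BijGroup_def)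
  then have hg: "\<forall>x\<in>carrier G. h (g x) = x" by (metis compose_eq restrict_apply')
  have "\<forall>x\<in>carrier G. g (h x) = x"
  proof
    fix x assume x: "x \<in> carrier G"
    then obtain y where "y \<in> carrier G" "x = g y" using P_auto(2)[OF assms] by (auto simp: bij_betw_def)
    then show "g (h x) = x" using hg by simp
  qed
  with hg hP show ?thesis by blast
qed


lemma orb_iff: "b \<in> orb a \<longleftrightarrow> (\<exists>g\<in>P. b = g a)"
  by (auto simp: aut_orbit_def)

lemma orb_sub: "a \<in> carrier G \<Longrightarrow> orb a \<subseteq> carrier G"
  using P_closed by (auto simp: orb_iff)

lemma orb_mem: "g \<in> P \<Longrightarrow> g a \<in> orb a"
  by (auto simp: orb_iff)

lemma orb_self: "a \<in> carrier G \<Longrightarrow> a \<in> orb a"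
  using P_id unfolding orb_iff by metis

lemma orb_trans: "a \<in> carrier G \<Longrightarrow> b \<in> orb a \<Longrightarrow> c \<in> orb b \<Longrightarrow> c \<in> orb a"
proof -
  assume a: "a \<in> carrier G" and "b \<in> orb a" "c \<in> orb b"
  then obtain g h where g: "g \<in> P" "b = g a" and h: "h \<in> P" "c = h b" by (auto simp: orb_iff)
  obtain k where "k \<in> P" "\<forall>x\<in>carrier G. k x = h (g x)" using P_comp[OF h(1) g(1)] by blast
  then show ?thesis using a g h unfolding orb_iff by (metis)
qed

lemma orb_symm: "a \<in> carrier G \<Longrightarrow> b \<in> orb a \<Longrightarrow> a \<in> orb b"
proof -
  assume a: "a \<in> carrier G" and "b \<in> orb a"
  then obtain g where g: "g \<in> P" "b = g a" by (auto simp: orb_iff)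
  obtain h where "h \<in> P" "\<forall>x\<in>carrier G. h (g x) = x \<and> g (h x) = x" using P_invf[OF g(1)] by blast
  then show ?thesis using a g unfolding orb_iff by metis
qed

lemma orb_eq: "a \<in> carrier G \<Longrightarrow> b \<in> orb a \<Longrightarrow> orb b = orb a"
proof -
  assume a: "a \<in> carrier G" and b: "b \<in> orb a"
  have bc: "b \<in> carrier G" using orb_sub[OF a] b by blast
  show ?thesis using orb_trans[OF a b] orb_trans[OF bc orb_symm[OF a b]] by blast
qed

lemma orb_eq_iff: "a \<in> carrier G \<Longrightarrow> b \<in> carrier G \<Longrightarrow> orb a = orb b \<longleftrightarrow> b \<in> orb a"
  using orb_eq orb_self orb_symm by metis

lemma orb_one: "orb \<one> = {\<one>}"
  using P_one orb_self[of \<one>] by (auto simp: orb_iff)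

lemma orb_inv: "a \<in> carrier G \<Longrightarrow> b \<in> orb a \<Longrightarrow> inv b \<in> orb (inv a)"
  using P_inv by (auto simp: orb_iff)

lemma orb_mult: "g \<in> P \<Longrightarrow> x \<in> carrier G \<Longrightarrow> y \<in> carrier G \<Longrightarrow> g (x \<otimes> y) = g x \<otimes> g y"
  by (rule P_mult)

lemma hop_mem: "a \<in> carrier G \<Longrightarrow> b \<in> carrier G \<Longrightarrow>
   X \<in> orbit_hop G P (orb a) (orb b) \<longleftrightarrow> (\<exists>x\<in>orb a. \<exists>y\<in>orb b. X = orb (x \<otimes> y))"
  unfolding orbit_hop_def
  apply (rule iffI)
   apply (clarsimp; metis orb_eq_iff orb_sub subsetD orb_self)
  apply clarsimp
  apply (metis orb_eq orb_sub subsetD)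
  done

lemma orbits_iff: "A \<in> orbits G P \<longleftrightarrow> (\<exists>a\<in>carrier G. A = orb a)"
  by (auto simp: orbits_def)


lemma orb_carrier: "a \<in> carrier G \<Longrightarrow> x \<in> orb a \<Longrightarrow> x \<in> carrier G"
  using orb_sub by blast

lemma hop_orbits: "a \<in> carrier G \<Longrightarrow> b \<in> carrier G \<Longrightarrow> orbit_hop G P (orb a) (orb b) \<subseteq> orbits G P"
  by (clarsimp simp: hop_mem orbits_iff) (metis m_closed orb_carrier)

lemma hop_ne: "a \<in> carrier G \<Longrightarrow> b \<in> carrier G \<Longrightarrow> orb (a \<otimes> b) \<in> orbit_hop G P (orb a) (orb b)"
  by (auto simp: hop_mem intro: orb_self)

lemma assocL: assumes a: "a \<in> carrier G" and b: "b \<in> carrier G" and c: "c \<in> carrier G"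
  shows "(\<Union>w\<in>orbit_hop G P (orb a) (orb b). orbit_hop G P w (orb c)) =
     {orb (x \<otimes> y \<otimes> z) | x y z. x \<in> orb a \<and> y \<in> orb b \<and> z \<in> orb c}"
proof (intro equalityI subsetI)
  fix X assume "X \<in> (\<Union>w\<in>orbit_hop G P (orb a) (orb b). orbit_hop G P w (orb c))"
  then obtain x y where xy: "x \<in> orb a" "y \<in> orb b" and X: "X \<in> orbit_hop G P (orb (x \<otimes> y)) (orb c)"
    using a b by (auto simp: hop_mem)
  have xc: "x \<in> carrier G" and yc: "y \<in> carrier G" using xy a b orb_carrier by auto
  from X obtain u v where u: "u \<in> orb (x \<otimes> y)" and v: "v \<in> orb c" and Xe: "X = orb (u \<otimes> v)"
    using xc yc c by (auto simp: hop_mem)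
  then obtain g where g: "g \<in> P" "u = g (x \<otimes> y)" by (auto simp: orb_iff)
  have "u = g x \<otimes> g y" using g xc yc P_mult by simp
  moreover have "g x \<in> orb a" using orb_trans[OF a xy(1) orb_mem[OF g(1)]] .
  moreover have "g y \<in> orb b" using orb_trans[OF b xy(2) orb_mem[OF g(1)]] .
  ultimately show "X \<in> {orb (x \<otimes> y \<otimes> z) | x y z. x \<in> orb a \<and> y \<in> orb b \<and> z \<in> orb c}"
    using Xe v by blast
next
  fix X assume "X \<in> {orb (x \<otimes> y \<otimes> z) | x y z. x \<in> orb a \<and> y \<in> orb b \<and> z \<in> orb c}"
  then obtain x y z where xyz: "x \<in> orb a" "y \<in> orb b" "z \<in> orb c" and X: "X = orb (x \<otimes> y \<otimes> z)" by blast
  have xc: "x \<in> carrier G" and yc: "y \<in> carrier G" using xyz a b orb_carrier by auto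
  have "orb (x \<otimes> y) \<in> orbit_hop G P (orb a) (orb b)" using a b xyz by (auto simp: hop_mem)
  moreover have "X \<in> orbit_hop G P (orb (x \<otimes> y)) (orb c)"
    using xc yc c xyz X by (auto simp: hop_mem intro!: orb_self)
  ultimately show "X \<in> (\<Union>w\<in>orbit_hop G P (orb a) (orb b). orbit_hop G P w (orb c))" by blast
qed

lemma assocR: assumes a: "a \<in> carrier G" and b: "b \<in> carrier G" and c: "c \<in> carrier G"
  shows "(\<Union>w\<in>orbit_hop G P (orb b) (orb c). orbit_hop G P (orb a) w) =
     {orb (x \<otimes> y \<otimes> z) | x y z. x \<in> orb a \<and> y \<in> orb b \<and> z \<in> orb c}"
proof (intro equalityI subsetI)
  fix X assume "X \<in> (\<Union>w\<in>orbit_hop G P (orb b) (orb c). orbit_hop G P (orb a) w)"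
  then obtain y z where yz: "y \<in> orb b" "z \<in> orb c" and X: "X \<in> orbit_hop G P (orb a) (orb (y \<otimes> z))"
    using b c by (auto simp: hop_mem)
  have zc: "z \<in> carrier G" and yc: "y \<in> carrier G" using yz c b orb_carrier by auto
  from X obtain u v where u: "v \<in> orb (y \<otimes> z)" and v: "u \<in> orb a" and Xe: "X = orb (u \<otimes> v)"
    using zc yc a by (auto simp: hop_mem)
  then obtain g where g: "g \<in> P" "v = g (y \<otimes> z)" by (auto simp: orb_iff)
  have vv: "v = g y \<otimes> g z" using g zc yc P_mult by simp
  have gy: "g y \<in> orb b" using orb_trans[OF b yz(1) orb_mem[OF g(1)]] .
  have gz: "g z \<in> orb c" using orb_trans[OF c yz(2) orb_mem[OF g(1)]] .
  have cc: "u \<in> carrier G" "g y \<in> carrier G" "g z \<in> carrier G"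
    using v a orb_carrier g zc yc P_closed by auto
  have "X = orb (u \<otimes> g y \<otimes> g z)" using Xe vv cc by (simp add: m_assoc)
  then show "X \<in> {orb (x \<otimes> y \<otimes> z) | x y z. x \<in> orb a \<and> y \<in> orb b \<and> z \<in> orb c}"
    using v gy gz by blast
next
  fix X assume "X \<in> {orb (x \<otimes> y \<otimes> z) | x y z. x \<in> orb a \<and> y \<in> orb b \<and> z \<in> orb c}"
  then obtain x y z where xyz: "x \<in> orb a" "y \<in> orb b" "z \<in> orb c" and X: "X = orb (x \<otimes> y \<otimes> z)" by blast
  have xc: "x \<in> carrier G" and yc: "y \<in> carrier G" and zc: "z \<in> carrier G" using xyz a b c orb_carrier by auto
  have "orb (y \<otimes> z) \<in> orbit_hop G P (orb b) (orb c)" using b c xyz by (auto simp: hop_mem)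
  moreover have "X = orb (x \<otimes> (y \<otimes> z))" using X xc yc zc by (simp add: m_assoc)
  then have "X \<in> orbit_hop G P (orb a) (orb (y \<otimes> z))"
    using xc yc zc a xyz by (auto simp: hop_mem intro!: orb_self)
  ultimately show "X \<in> (\<Union>w\<in>orbit_hop G P (orb b) (orb c). orbit_hop G P (orb a) w)" by blast
qed


lemma orb_one_id: "is_hg_identity (orbits G P) (orbit_hop G P) (orb \<one>)"
  unfolding is_hg_identity_def
proof (intro conjI ballI)
  show "orb \<one> \<in> orbits G P" by (auto simp: orbits_iff)
next
  fix B assume "B \<in> orbits G P"
  then obtain b where b: "b \<in> carrier G" "B = orb b" by (auto simp: orbits_iff)
  have "orbit_hop G P (orb \<one>) (orb b) = {orb b}"
  proof (intro equalityI subsetI)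
    fix X assume "X \<in> orbit_hop G P (orb \<one>) (orb b)"
    then obtain y where "y \<in> orb b" "X = orb y" using b hop_mem[of \<one> b] orb_carrier by (auto simp: orb_one)
    then show "X \<in> {orb b}" using orb_eq b by auto
  next
    fix X assume "X \<in> {orb b}"
    then show "X \<in> orbit_hop G P (orb \<one>) (orb b)" using b hop_mem[of \<one> b] orb_self[of b]
      by (auto simp: orb_one intro!: bexI[of _ b])
  qed
  moreover have "orbit_hop G P (orb b) (orb \<one>) = {orb b}"
  proof (intro equalityI subsetI)
    fix X assume "X \<in> orbit_hop G P (orb b) (orb \<one>)"
    then obtain y where "y \<in> orb b" "X = orb y" using b hop_mem[of b \<one>] orb_carrier by (auto simp: orb_one)
    then show "X \<in> {orb b}" using orb_eq b by auto
  next
    fix X assume "X \<in> {orb b}"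
    then show "X \<in> orbit_hop G P (orb b) (orb \<one>)" using b hop_mem[of b \<one>] orb_self[of b]
      by (auto simp: orb_one intro!: bexI[of _ b])
  qed
  ultimately show "orbit_hop G P (orb \<one>) B = {B}" "orbit_hop G P B (orb \<one>) = {B}" using b by auto
qed

lemma orb_hg_id: "hg_id (orbits G P) (orbit_hop G P) = orb \<one>"
  by (rule hg_id_eq[OF orb_one_id])

lemma one_in_hop: assumes a: "a \<in> carrier G" and d: "d \<in> carrier G"
  shows "orb \<one> \<in> orbit_hop G P (orb d) (orb a) \<longleftrightarrow> orb d = orb (inv a)"
proof
  assume "orb \<one> \<in> orbit_hop G P (orb d) (orb a)"
  then obtain x y where xy: "x \<in> orb d" "y \<in> orb a" "orb \<one> = orb (x \<otimes> y)" using a d by (auto simp: hop_mem)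
  have xc: "x \<in> carrier G" and yc: "y \<in> carrier G" using xy a d orb_carrier by auto
  have "x \<otimes> y \<in> orb \<one>" using xy(3) orb_self xc yc by simp
  then have "x \<otimes> y = \<one>" by (simp add: orb_one)
  then have "x = inv y" using xc yc by (simp add: inv_equality)
  then have "x \<in> orb (inv a)" using orb_inv[OF a xy(2)] by simp
  then show "orb d = orb (inv a)" using orb_eq[OF d xy(1)] orb_eq[OF _ \<open>x \<in> orb (inv a)\<close>] a by simp
next
  assume e: "orb d = orb (inv a)"
  have "orb \<one> = orb (inv a \<otimes> a)" using a by simp
  then show "orb \<one> \<in> orbit_hop G P (orb d) (orb a)" unfolding e hop_mem[OF inv_closed[OF a] a] using a
    by (intro bexI[of _ "inv a"] bexI[of _ a]) (auto intro: orb_self)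
qed

lemma one_in_hop': assumes a: "a \<in> carrier G" and d: "d \<in> carrier G"
  shows "orb \<one> \<in> orbit_hop G P (orb a) (orb d) \<longleftrightarrow> orb d = orb (inv a)"
proof
  assume "orb \<one> \<in> orbit_hop G P (orb a) (orb d)"
  then obtain x y where xy: "x \<in> orb a" "y \<in> orb d" "orb \<one> = orb (x \<otimes> y)" using a d by (auto simp: hop_mem)
  have xc: "x \<in> carrier G" and yc: "y \<in> carrier G" using xy a d orb_carrier by auto
  have "x \<otimes> y \<in> orb \<one>" using xy(3) orb_self xc yc by simp
  then have "x \<otimes> y = \<one>" by (simp add: orb_one)
  then have "y \<otimes> x = \<one>" using inv_comm xc yc by blast
  then have "y = inv x" using inv_equality xc yc by metis
  then have "y \<in> orb (inv a)" using orb_inv[OF a xy(1)] by simp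
  then show "orb d = orb (inv a)" using orb_eq[OF d xy(2)] orb_eq[OF _ \<open>y \<in> orb (inv a)\<close>] a by simp
next
  assume e: "orb d = orb (inv a)"
  have "orb \<one> = orb (a \<otimes> inv a)" using a by simp
  then show "orb \<one> \<in> orbit_hop G P (orb a) (orb d)" unfolding e hop_mem[OF a inv_closed[OF a]] using a
    by (intro bexI[of _ a] bexI[of _ "inv a"]) (auto intro: orb_self)
qed

lemma orb_inverse: assumes a: "a \<in> carrier G"
  shows "is_hg_inverse (orbits G P) (orbit_hop G P) (orb a) (orb (inv a))"
    and "\<And>k. is_hg_inverse (orbits G P) (orbit_hop G P) (orb a) k \<Longrightarrow> k = orb (inv a)"
proof -
  show "is_hg_inverse (orbits G P) (orbit_hop G P) (orb a) (orb (inv a))"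
    unfolding is_hg_inverse_def orb_hg_id
    using one_in_hop[OF a inv_closed[OF a]] one_in_hop'[OF a inv_closed[OF a]] a
    by (auto simp: orbits_iff)
  fix k assume "is_hg_inverse (orbits G P) (orbit_hop G P) (orb a) k"
  then have k: "k \<in> orbits G P" "orb \<one> \<in> orbit_hop G P k (orb a)"
    unfolding is_hg_inverse_def orb_hg_id by auto
  then obtain d where d: "d \<in> carrier G" "k = orb d" by (auto simp: orbits_iff)
  then show "k = orb (inv a)" using one_in_hop[OF a d(1)] k(2) by simp
qed

lemma orb_hg_inv: "a \<in> carrier G \<Longrightarrow> hg_inv (orbits G P) (orbit_hop G P) (orb a) = orb (inv a)"
  using hg_inv_eq orb_inverse by metis


lemma orb_rev: assumes a: "a \<in> carrier G" and b: "b \<in> carrier G" and c: "c \<in> carrier G"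
  and h: "orb c \<in> orbit_hop G P (orb a) (orb b)"
  shows "orb b \<in> orbit_hop G P (orb (inv a)) (orb c)" "orb a \<in> orbit_hop G P (orb c) (orb (inv b))"
proof -
  obtain u v where uv: "u \<in> orb a" "v \<in> orb b" "orb c = orb (u \<otimes> v)" using h a b by (auto simp: hop_mem)
  have uc: "u \<in> carrier G" and vc: "v \<in> carrier G" using uv a b orb_carrier by auto
  have uvc: "u \<otimes> v \<in> orb c" using uv(3) orb_self uc vc by simp
  have iu: "inv u \<in> orb (inv a)" using orb_inv[OF a uv(1)] .
  have iv: "inv v \<in> orb (inv b)" using orb_inv[OF b uv(2)] .
  have "inv u \<otimes> (u \<otimes> v) = v" using uc vc by (simp add: m_assoc[symmetric])
  then have "orb b = orb (inv u \<otimes> (u \<otimes> v))" using orb_eq[OF b uv(2)] by simp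
  then show "orb b \<in> orbit_hop G P (orb (inv a)) (orb c)"
    unfolding hop_mem[OF inv_closed[OF a] c] using iu uvc by blast
  have "(u \<otimes> v) \<otimes> inv v = u" using uc vc by (simp add: m_assoc)
  then have "orb a = orb ((u \<otimes> v) \<otimes> inv v)" using orb_eq[OF a uv(1)] by simp
  then show "orb a \<in> orbit_hop G P (orb c) (orb (inv b))"
    unfolding hop_mem[OF c inv_closed[OF b]] using iv uvc by blast
qed

theorem orbit_hypergroup: "hypergroup (orbits G P) (orbit_hop G P)"
  unfolding hypergroup_def
proof (intro conjI ballI impI)
  show "orbits G P \<noteq> {}" by (auto simp: orbits_def)
next
  fix X Y assume "X \<in> orbits G P" "Y \<in> orbits G P"
  then obtain a b where ab: "a \<in> carrier G" "b \<in> carrier G" "X = orb a" "Y = orb b" by (auto simp: orbits_iff)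
  then show "orbit_hop G P X Y \<noteq> {}" using hop_ne[OF ab(1,2)] by auto
  show "orbit_hop G P X Y \<subseteq> orbits G P"
    using hop_orbits[OF ab(1,2)] ab by simp
next
  fix X Y Z assume "X \<in> orbits G P" "Y \<in> orbits G P" "Z \<in> orbits G P"
  then obtain a b c where "a \<in> carrier G" "b \<in> carrier G" "c \<in> carrier G" "X = orb a" "Y = orb b" "Z = orb c"
    by (auto simp: orbits_iff)
  then show "(\<Union>w\<in>orbit_hop G P X Y. orbit_hop G P w Z) = (\<Union>w\<in>orbit_hop G P Y Z. orbit_hop G P X w)"
    using assocL assocR by simp
next
  show "\<exists>!e. is_hg_identity (orbits G P) (orbit_hop G P) e"
    using orb_one_id hg_id_unique by metis
next
  fix X assume "X \<in> orbits G P"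
  then obtain a where a: "a \<in> carrier G" "X = orb a" by (auto simp: orbits_iff)
  then show "\<exists>!h'. is_hg_inverse (orbits G P) (orbit_hop G P) X h'"
    using orb_inverse[OF a(1)] by metis
next
  fix X Y Z assume "X \<in> orbits G P" "Y \<in> orbits G P" "Z \<in> orbits G P" and h: "Z \<in> orbit_hop G P X Y"
  then obtain a b c where abc: "a \<in> carrier G" "b \<in> carrier G" "c \<in> carrier G" "X = orb a" "Y = orb b" "Z = orb c"
    by (auto simp: orbits_iff)
  show "Y \<in> orbit_hop G P (hg_inv (orbits G P) (orbit_hop G P) X) Z"
    using orb_rev(1)[OF abc(1-3)] h abc orb_hg_inv by simp
  show "X \<in> orbit_hop G P Z (hg_inv (orbits G P) (orbit_hop G P) Y)"
    using orb_rev(2)[OF abc(1-3)] h abc orb_hg_inv by simp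
qed


abbreviation C where "C A \<equiv> orbit_rel G P A"

lemma C_mem: "(x, y) \<in> C A \<longleftrightarrow> x \<in> carrier G \<and> y \<in> carrier G \<and> x \<otimes> inv y \<in> A"
  by (simp add: orbit_rel_def)

lemma N_mem: "w \<in> row y (C A) \<inter> row z (converse (C B)) \<longleftrightarrow>
   y \<in> carrier G \<and> w \<in> carrier G \<and> z \<in> carrier G \<and> y \<otimes> inv w \<in> A \<and> w \<otimes> inv z \<in> B"
  by (auto simp: row_def orbit_rel_def)

lemma orb_closed: "a \<in> carrier G \<Longrightarrow> t \<in> orb a \<Longrightarrow> k \<in> P \<Longrightarrow> k t \<in> orb a"
  using orb_trans orb_mem by blast

lemma alg1: "y \<in> carrier G \<Longrightarrow> u \<in> carrier G \<Longrightarrow> y \<otimes> inv (u \<otimes> y) = inv u"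
  by (simp add: inv_mult_group m_assoc[symmetric])

lemma alg2: "u \<in> carrier G \<Longrightarrow> y \<in> carrier G \<Longrightarrow> z \<in> carrier G \<Longrightarrow> u \<otimes> y \<otimes> inv z = u \<otimes> (y \<otimes> inv z)"
  by (simp add: m_assoc)

lemma alg3: "u \<in> carrier G \<Longrightarrow> y \<in> carrier G \<Longrightarrow> u \<otimes> y \<otimes> inv y = u"
  by (simp add: m_assoc)

lemma alg4: "w \<in> carrier G \<Longrightarrow> c \<in> carrier G \<Longrightarrow> w \<otimes> inv c \<otimes> c = w"
  by (simp add: m_assoc)

lemma alg5: "w \<in> carrier G \<Longrightarrow> y \<in> carrier G \<Longrightarrow> z \<in> carrier G \<Longrightarrow> w \<otimes> inv y \<otimes> (y \<otimes> inv z) = w \<otimes> inv z"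
  by (simp add: m_assoc[symmetric]) (simp add: m_assoc)

lemma inv_mult_inv: "x \<in> carrier G \<Longrightarrow> y \<in> carrier G \<Longrightarrow> inv (x \<otimes> inv y) = y \<otimes> inv x"
  by (simp add: inv_mult_group)


lemma N_transport:
  assumes a: "a \<in> carrier G" and b: "b \<in> carrier G" and c: "c \<in> carrier G"
    and y: "y \<in> carrier G" and z: "z \<in> carrier G" and yz: "y \<otimes> inv z \<in> orb c"
  shows "row y (C (orb a)) \<inter> row z (converse (C (orb b))) \<approx> row c (C (orb a)) \<inter> row \<one> (converse (C (orb b)))"
proof -
  obtain g where g: "g \<in> P" "y \<otimes> inv z = g c" using yz by (auto simp: orb_iff)
  obtain h where h: "h \<in> P" "\<And>x. x \<in> carrier G \<Longrightarrow> h (g x) = x \<and> g (h x) = x" using P_invf[OF g(1)] by blast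
  define N1 where "N1 = row y (C (orb a)) \<inter> row z (converse (C (orb b)))"
  define N2 where "N2 = row c (C (orb a)) \<inter> row \<one> (converse (C (orb b)))"
  define \<phi> where "\<phi> w = g (w \<otimes> inv c) \<otimes> y" for w
  define \<psi> where "\<psi> w = h (w \<otimes> inv y) \<otimes> c" for w
  have phi_ok: "\<phi> w \<in> N1" if w: "w \<in> N2" for w
  proof -
    from w have wc: "w \<in> carrier G" and w1: "c \<otimes> inv w \<in> orb a" and w2: "w \<in> orb b"
      unfolding N2_def N_mem by auto
    define u where "u = g (w \<otimes> inv c)"
    have uc: "u \<in> carrier G" unfolding u_def using P_closed g wc c by simp
    have "y \<otimes> inv (u \<otimes> y) = inv u" using alg1 y uc by simp
    also have "\<dots> = g (c \<otimes> inv w)"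
    proof -
      have "g (c \<otimes> inv w) = g (inv (w \<otimes> inv c))" using inv_mult_inv[OF wc c] by simp
      also have "\<dots> = inv u" unfolding u_def using P_inv[OF g(1)] wc c by simp
      finally show ?thesis by simp
    qed
    finally have e1: "y \<otimes> inv (\<phi> w) \<in> orb a" unfolding \<phi>_def u_def[symmetric] using orb_closed[OF a w1 g(1)] by simp
    have "u \<otimes> y \<otimes> inv z = u \<otimes> g c" using alg2 uc y z g(2) by simp
    also have "\<dots> = g (w \<otimes> inv c \<otimes> c)" unfolding u_def using P_mult[OF g(1)] wc c by simp
    also have "\<dots> = g w" using alg4 wc c by simp
    finally have e2: "\<phi> w \<otimes> inv z \<in> orb b" unfolding \<phi>_def u_def[symmetric] using orb_closed[OF b w2 g(1)] by simp
    show ?thesis unfolding N1_def N_mem using e1 e2 uc y z unfolding \<phi>_def u_def[symmetric] by simp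
  qed
  have psi_ok: "\<psi> w \<in> N2" if w: "w \<in> N1" for w
  proof -
    from w have wc: "w \<in> carrier G" and w1: "y \<otimes> inv w \<in> orb a" and w2: "w \<otimes> inv z \<in> orb b"
      unfolding N1_def N_mem by auto
    define v where "v = h (w \<otimes> inv y)"
    have vc: "v \<in> carrier G" unfolding v_def using P_closed h wc y by simp
    have "c \<otimes> inv (v \<otimes> c) = inv v" using alg1 c vc by simp
    also have "\<dots> = h (y \<otimes> inv w)"
    proof -
      have "h (y \<otimes> inv w) = h (inv (w \<otimes> inv y))" using inv_mult_inv[OF wc y] by simp
      also have "\<dots> = inv v" unfolding v_def using P_inv[OF h(1)] wc y by simp
      finally show ?thesis by simp
    qed
    finally have e1: "c \<otimes> inv (\<psi> w) \<in> orb a" unfolding \<psi>_def v_def[symmetric] using orb_closed[OF a w1 h(1)] by simp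
    have cc: "c = h (y \<otimes> inv z)" using g(2) h(2) c by simp
    have "v \<otimes> c \<otimes> inv \<one> = v \<otimes> c" using vc c by simp
    also have "\<dots> = h (w \<otimes> inv y \<otimes> (y \<otimes> inv z))" unfolding v_def cc using P_mult[OF h(1)] wc y z by simp
    also have "\<dots> = h (w \<otimes> inv z)" using alg5 wc y z by simp
    finally have e2: "\<psi> w \<otimes> inv \<one> \<in> orb b" unfolding \<psi>_def v_def[symmetric] using orb_closed[OF b w2 h(1)] by simp
    show ?thesis unfolding N2_def N_mem using e1 e2 vc c unfolding \<psi>_def v_def[symmetric] by simp
  qed
  have pp: "\<psi> (\<phi> w) = w" if w: "w \<in> N2" for w
  proof -
    have wc: "w \<in> carrier G" using w unfolding N2_def N_mem by auto
    have uc: "g (w \<otimes> inv c) \<in> carrier G" using P_closed g wc c by simp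
    show ?thesis unfolding \<psi>_def \<phi>_def using alg3[OF uc y] h(2) wc c alg4 by simp
  qed
  have qq: "\<phi> (\<psi> w) = w" if w: "w \<in> N1" for w
  proof -
    have wc: "w \<in> carrier G" using w unfolding N1_def N_mem by auto
    have vc: "h (w \<otimes> inv y) \<in> carrier G" using P_closed h wc y by simp
    show ?thesis unfolding \<psi>_def \<phi>_def using alg3[OF vc c] h(2) wc y alg4 by simp
  qed
  have "bij_betw \<psi> N1 N2"
    by (rule bij_betw_byWitness[where f'=\<phi>]) (use pp qq phi_ok psi_ok in auto)
  then show ?thesis unfolding N1_def N2_def eqpoll_def by blast
qed


lemma scheme_iff: "p \<in> partition_scheme G P \<longleftrightarrow> (\<exists>a\<in>carrier G. p = C (orb a))"
  by (auto simp: partition_scheme_def orbits_def)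

lemma C_self: "a \<in> carrier G \<Longrightarrow> (a, \<one>) \<in> C (orb a)"
  by (simp add: C_mem orb_self)

lemma C_inj: assumes a: "a \<in> carrier G" and b: "b \<in> carrier G" and e: "C (orb a) = C (orb b)"
  shows "orb a = orb b"
proof -
  have "(a, \<one>) \<in> C (orb b)" using C_self[OF a] e by simp
  then have "a \<in> orb b" using a by (simp add: C_mem)
  then show ?thesis using orb_eq[OF b] by simp
qed

lemma C_disj: assumes a: "a \<in> carrier G" and b: "b \<in> carrier G" and xy: "(x, y) \<in> C (orb a)" "(x, y) \<in> C (orb b)"
  shows "orb a = orb b"
proof -
  have "x \<otimes> inv y \<in> orb a" "x \<otimes> inv y \<in> orb b" using xy by (auto simp: C_mem)
  then show ?thesis using orb_eq[OF a] orb_eq[OF b] by metis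
qed

lemma C_conv_iff: assumes a: "a \<in> carrier G"
  shows "(y, x) \<in> converse (C (orb a)) \<longleftrightarrow> (y, x) \<in> C (orb (inv a))"
proof
  assume "(y, x) \<in> converse (C (orb a))"
  then have h: "x \<in> carrier G" "y \<in> carrier G" "x \<otimes> inv y \<in> orb a" by (auto simp: C_mem)
  then have "inv (x \<otimes> inv y) \<in> orb (inv a)" using orb_inv[OF a] by blast
  then show "(y, x) \<in> C (orb (inv a))" using h inv_mult_inv by (simp add: C_mem)
next
  assume "(y, x) \<in> C (orb (inv a))"
  then have h: "x \<in> carrier G" "y \<in> carrier G" "y \<otimes> inv x \<in> orb (inv a)" by (auto simp: C_mem)
  then have "inv (y \<otimes> inv x) \<in> orb (inv (inv a))" using orb_inv[OF inv_closed[OF a]] by blast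
  then show "(y, x) \<in> converse (C (orb a))" using h inv_mult_inv a by (simp add: C_mem)
qed

lemma C_conv: assumes a: "a \<in> carrier G" shows "converse (C (orb a)) = C (orb (inv a))"
  using C_conv_iff[OF a] by auto

lemma C_one_iff: "(x, y) \<in> C (orb \<one>) \<longleftrightarrow> (x, y) \<in> Id_on (carrier G)"
proof
  assume "(x, y) \<in> C (orb \<one>)"
  then have h: "x \<in> carrier G" "y \<in> carrier G" "x \<otimes> inv y = \<one>" by (auto simp: C_mem orb_one)
  then have "inv (inv y) = x" using inv_equality[of x "inv y"] by simp
  then show "(x, y) \<in> Id_on (carrier G)" using h by (auto intro: Id_onI)
next
  assume "(x, y) \<in> Id_on (carrier G)"
  then show "(x, y) \<in> C (orb \<one>)" by (auto simp: C_mem orb_one)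
qed

lemma C_one: "C (orb \<one>) = Id_on (carrier G)"
  using C_one_iff by auto

theorem scheme_assoc: "association_scheme (carrier G) (partition_scheme G P)"
  unfolding association_scheme_def partition_of_def
proof (intro conjI ballI)
  show "carrier G \<noteq> {}" by auto
next
  fix p assume "p \<in> partition_scheme G P"
  then obtain a where a: "a \<in> carrier G" "p = C (orb a)" by (auto simp: scheme_iff)
  then show "p \<noteq> {}" using C_self by auto
next
  fix p q assume "p \<in> partition_scheme G P" "q \<in> partition_scheme G P"
  then obtain a b where a: "a \<in> carrier G" "p = C (orb a)" and b: "b \<in> carrier G" "q = C (orb b)"
    by (auto simp: scheme_iff)
  show "p \<noteq> q \<longrightarrow> p \<inter> q = {}"
  proof
    assume "p \<noteq> q"
    show "p \<inter> q = {}"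
    proof (rule ccontr)
      assume "p \<inter> q \<noteq> {}"
      then obtain x y where "(x, y) \<in> p" "(x, y) \<in> q" by auto
      then have "orb a = orb b" using C_disj[OF a(1) b(1)] a b by simp
      then show False using \<open>p \<noteq> q\<close> a b by simp
    qed
  qed
next
  show "\<Union> (partition_scheme G P) = carrier G \<times> carrier G"
  proof (intro equalityI subsetI)
    fix xy assume "xy \<in> \<Union> (partition_scheme G P)"
    then show "xy \<in> carrier G \<times> carrier G" by (auto simp: scheme_iff orbit_rel_def)
  next
    fix xy assume "xy \<in> carrier G \<times> carrier G"
    then obtain x y where xy: "xy = (x, y)" "x \<in> carrier G" "y \<in> carrier G" by auto
    then have "xy \<in> C (orb (x \<otimes> inv y))" by (simp add: C_mem orb_self)
    moreover have "C (orb (x \<otimes> inv y)) \<in> partition_scheme G P" using xy by (auto simp: scheme_iff)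
    ultimately show "xy \<in> \<Union> (partition_scheme G P)" by blast
  qed
next
  show "Id_on (carrier G) \<in> partition_scheme G P" using C_one[symmetric] by (auto simp: scheme_iff)
next
  fix p assume "p \<in> partition_scheme G P"
  then obtain a where a: "a \<in> carrier G" "p = C (orb a)" by (auto simp: scheme_iff)
  then show "converse p \<in> partition_scheme G P" using C_conv by (auto simp: scheme_iff)
next
  fix p q r assume "p \<in> partition_scheme G P" "q \<in> partition_scheme G P" "r \<in> partition_scheme G P"
  then obtain a b c where a: "a \<in> carrier G" "p = C (orb a)" and b: "b \<in> carrier G" "q = C (orb b)"
    and c: "c \<in> carrier G" "r = C (orb c)" by (auto simp: scheme_iff)
  define W where "W = row c (C (orb a)) \<inter> row \<one> (converse (C (orb b)))"
  have "\<forall>y\<in>carrier G. \<forall>z\<in>row y r. row y p \<inter> row z (converse q) \<approx> W"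
  proof (intro ballI)
    fix y z assume y: "y \<in> carrier G" and z: "z \<in> row y r"
    then have "z \<in> carrier G" "y \<otimes> inv z \<in> orb c" using c by (auto simp: row_def C_mem)
    then show "row y p \<inter> row z (converse q) \<approx> W"
      unfolding W_def using N_transport[OF a(1) b(1) c(1) y] a b by simp
  qed
  then show "\<exists>c0::'a set. \<forall>y\<in>carrier G. \<forall>z\<in>row y r. row y p \<inter> row z (converse q) \<approx> c0" by blast
qed


lemma N_ne_iff: assumes a: "a \<in> carrier G" and b: "b \<in> carrier G" and c: "c \<in> carrier G"
  shows "row c (C (orb a)) \<inter> row \<one> (converse (C (orb b))) \<noteq> {} \<longleftrightarrow> orb c \<in> orbit_hop G P (orb a) (orb b)"
proof
  assume "row c (C (orb a)) \<inter> row \<one> (converse (C (orb b))) \<noteq> {}"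
  then obtain w where "w \<in> row c (C (orb a)) \<inter> row \<one> (converse (C (orb b)))" by blast
  then have w: "w \<in> carrier G" "c \<otimes> inv w \<in> orb a" "w \<otimes> inv \<one> \<in> orb b" unfolding N_mem by auto
  have w2: "w \<in> orb b" using w by simp
  have "c \<otimes> inv w \<otimes> w = c" using w c by (simp add: m_assoc)
  then show "orb c \<in> orbit_hop G P (orb a) (orb b)"
    unfolding hop_mem[OF a b] using w(2) w2 by metis
next
  assume "orb c \<in> orbit_hop G P (orb a) (orb b)"
  then obtain x y where xy: "x \<in> orb a" "y \<in> orb b" "orb c = orb (x \<otimes> y)" unfolding hop_mem[OF a b] by blast
  have xc: "x \<in> carrier G" and yc: "y \<in> carrier G" using xy a b orb_carrier by auto
  have "c \<in> orb (x \<otimes> y)" using xy(3) orb_self c by metis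
  then obtain g where g: "g \<in> P" "c = g (x \<otimes> y)" by (auto simp: orb_iff)
  then have cg: "c = g x \<otimes> g y" using P_mult xc yc by simp
  have gx: "g x \<in> carrier G" "g y \<in> carrier G" using P_closed g xc yc by auto
  have "c \<otimes> inv (g y) = g x" unfolding cg using gx by (simp add: m_assoc)
  then have "g y \<in> row c (C (orb a)) \<inter> row \<one> (converse (C (orb b)))"
    unfolding N_mem using gx c orb_closed[OF a xy(1) g(1)] orb_closed[OF b xy(2) g(1)] by simp
  then show "row c (C (orb a)) \<inter> row \<one> (converse (C (orb b))) \<noteq> {}" by blast
qed

lemma shop_iff: assumes a: "a \<in> carrier G" and b: "b \<in> carrier G" and c: "c \<in> carrier G"
  shows "C (orb c) \<in> scheme_hop (carrier G) (partition_scheme G P) (C (orb a)) (C (orb b))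
     \<longleftrightarrow> orb c \<in> orbit_hop G P (orb a) (orb b)"
proof
  assume "C (orb c) \<in> scheme_hop (carrier G) (partition_scheme G P) (C (orb a)) (C (orb b))"
  then have "\<forall>y\<in>carrier G. \<forall>z\<in>row y (C (orb c)). row y (C (orb a)) \<inter> row z (converse (C (orb b))) \<noteq> {}"
    unfolding scheme_hop_def by blast
  moreover have "\<one> \<in> row c (C (orb c))" using C_self[OF c] by (simp add: row_def)
  ultimately show "orb c \<in> orbit_hop G P (orb a) (orb b)" using N_ne_iff[OF a b c] c by blast
next
  assume h: "orb c \<in> orbit_hop G P (orb a) (orb b)"
  have "row y (C (orb a)) \<inter> row z (converse (C (orb b))) \<noteq> {}" if y: "y \<in> carrier G" and z: "z \<in> row y (C (orb c))" for y z
  proof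
    assume e: "row y (C (orb a)) \<inter> row z (converse (C (orb b))) = {}"
    have "z \<in> carrier G" "y \<otimes> inv z \<in> orb c" using z by (auto simp: row_def C_mem)
    then have "row y (C (orb a)) \<inter> row z (converse (C (orb b))) \<approx> row c (C (orb a)) \<inter> row \<one> (converse (C (orb b)))"
      using N_transport[OF a b c y] by simp
    then have "row c (C (orb a)) \<inter> row \<one> (converse (C (orb b))) = {}"
      using e eqpoll_sym eqpoll_empty_iff_empty by metis
    then show False using N_ne_iff[OF a b c] h by blast
  qed
  moreover have "C (orb c) \<in> partition_scheme G P" using c by (auto simp: scheme_iff)
  ultimately show "C (orb c) \<in> scheme_hop (carrier G) (partition_scheme G P) (C (orb a)) (C (orb b))"
    unfolding scheme_hop_def by blast
qed

theorem orb_iso: "hg_iso (orbits G P) (orbit_hop G P) (partition_scheme G P)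
    (scheme_hop (carrier G) (partition_scheme G P)) (orbit_rel G P)"
  unfolding hg_iso_def
proof (intro conjI ballI)
  show "bij_betw (orbit_rel G P) (orbits G P) (partition_scheme G P)"
    unfolding bij_betw_def
  proof
    show "inj_on (orbit_rel G P) (orbits G P)"
    proof (rule inj_onI)
      fix X Y assume "X \<in> orbits G P" "Y \<in> orbits G P" and e: "C X = C Y"
      then obtain a b where "a \<in> carrier G" "X = orb a" "b \<in> carrier G" "Y = orb b"
        by (auto simp: orbits_iff)
      then show "X = Y" using C_inj e by simp
    qed
    show "orbit_rel G P ` orbits G P = partition_scheme G P" by (simp add: partition_scheme_def)
  qed
next
  fix X Y assume "X \<in> orbits G P" "Y \<in> orbits G P"
  then obtain a b where a: "a \<in> carrier G" "X = orb a" and b: "b \<in> carrier G" "Y = orb b"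
    by (auto simp: orbits_iff)
  show "orbit_rel G P ` orbit_hop G P X Y = scheme_hop (carrier G) (partition_scheme G P) (C X) (C Y)"
  proof (intro equalityI subsetI)
    fix r assume "r \<in> orbit_rel G P ` orbit_hop G P X Y"
    then obtain Z where Z: "Z \<in> orbit_hop G P (orb a) (orb b)" "r = C Z" using a b by blast
    have "Z \<in> orbits G P" using hop_orbits[OF a(1) b(1)] Z(1) by (rule subsetD)
    then obtain c where c: "c \<in> carrier G" "Z = orb c" by (auto simp: orbits_iff)
    have "orb c \<in> orbit_hop G P (orb a) (orb b)" using Z(1) c(2) by simp
    then have "C (orb c) \<in> scheme_hop (carrier G) (partition_scheme G P) (C (orb a)) (C (orb b))"
      by (rule shop_iff[OF a(1) b(1) c(1), THEN iffD2])
    then show "r \<in> scheme_hop (carrier G) (partition_scheme G P) (C X) (C Y)"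
      using Z(2) c(2) a(2) b(2) by simp
  next
    fix r assume r: "r \<in> scheme_hop (carrier G) (partition_scheme G P) (C X) (C Y)"
    then have "r \<in> partition_scheme G P" by (simp add: scheme_hop_def)
    then obtain c where c: "c \<in> carrier G" "r = C (orb c)" by (auto simp: scheme_iff)
    have "C (orb c) \<in> scheme_hop (carrier G) (partition_scheme G P) (C (orb a)) (C (orb b))"
      using r c(2) a(2) b(2) by simp
    then have "orb c \<in> orbit_hop G P (orb a) (orb b)"
      by (rule shop_iff[OF a(1) b(1) c(1), THEN iffD1])
    then have "orb c \<in> orbit_hop G P X Y" using a(2) b(2) by simp
    then show "r \<in> orbit_rel G P ` orbit_hop G P X Y" using c by blast
  qed
qed

end

theorem corollary5p6:
  fixes G :: "('a, 'c) monoid_scheme" and P :: "('a \<Rightarrow> 'a) set"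
  assumes "group G"
    and "subgroup P (AutoGroup G)"
  shows "hypergroup (orbits G P) (orbit_hop G P)
    \<and> association_scheme (carrier G) (partition_scheme G P)
    \<and> hypergroup (partition_scheme G P) (scheme_hop (carrier G) (partition_scheme G P))
    \<and> hg_isomorphic (orbits G P) (orbit_hop G P)
         (partition_scheme G P) (scheme_hop (carrier G) (partition_scheme G P))"
proof -
  interpret autP G P
    by (rule autP.intro[OF assms(1)]) (rule autP_axioms.intro[OF assms(2)])
  have h1: "hypergroup (orbits G P) (orbit_hop G P)" by (rule orbit_hypergroup)
  have iso: "hg_iso (orbits G P) (orbit_hop G P) (partition_scheme G P)
    (scheme_hop (carrier G) (partition_scheme G P)) (orbit_rel G P)" by (rule orb_iso)
  show ?thesis
    using h1 scheme_assoc hg_transfer[OF h1 iso] iso unfolding hg_isomorphic_def by blast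
qed

end
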